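(* Consider a distributed index coding problem with $n$ messages, side-information sets $A_1,\dots,A_n$, and server capacities $\mathbf C=(C_J:J\in N)$. Let $U=\mathrm{cl}(\emptyset)$, and let $V\subseteq[n]\setminus U$ be a set of minimum cardinality with $\mathrm{cl}(U\cup V)=[n]$. Assume $V$ satisfies Condition 1, namely $V\subseteq\mathrm{cl}([n]\setminus V)$. Then every rate tuple $\mathbf R=(R_1,\dots,R_n)$ in the capacity region satisfies \[ \sum_{i\in[n]}R_i\le \sum_{J\in N}C_J+\sum_{J\in N:\ J\cap V\neq\emptyset,\ J\not\subseteq U\cup V}C_J . \]
   Context: A distributed index coding problem has $n$ messages $x_i\in\{0,1\}^{t_i}$ and $2^n-1$ servers, one for each $J\in N=\{J\subseteq[n]:J\neq\emptyset\}$. Server $J$ has access to $x(J)=(x_i:i\in J)$ and is connected to all receivers by a noiseless broadcast link of capacity $C_J\ge 0$. Receiver $i\in[n]$ wants $x_i$ and knows $x(A_i)$ for some $A_i\subseteq[n]\setminus\{i\}$. A $(\mathbf t,\mathbf r)$ distributed index code consists of encoders $\phi_J:\prod_{j\in J}\{0,1\}^{t_j}\to\{0,1\}^{r_J}$ and decoders $\psi_i$ mapping $(\phi_J(x(J)),J\in N)$ and $x(A_i)$ to $\hat x_i$. The messages $X_i$ are independent and uniform. A tuple $(\mathbf R,\mathbf C)$ is achievable if for every $\epsilon>0$ there exist a $(\mathbf t,\mathbf r)$ code and an integer $r$ with $R_i\le t_i/r$ for all $i$, $C_J\ge r_J/r$ for all $J$, and $\Pr\{(\hat X_1,\dots,\hat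 X_n)\neq(X_1,\dots,X_n)\}\le\epsilon$. The capacity region for given $\mathbf C$ is the closure of the set of $\mathbf R$ such that $(\mathbf R,\mathbf C)$ is achievable. For $T\subseteq[n]$, $\mathrm{cl}(T)$ is the smallest set $S\supseteq T$ such that for every $i\in[n]$ with $A_i\subseteq S$ we have $i\in S$. This is the set of messages recoverable from all server outputs together with $x(T)$ by repeatedly applying the receivers' decoding rules. A set $V$ satisfies Condition 1 if $V\subseteq\mathrm{cl}([n]\setminus V)$. If several minimum sets $V$ exist, the bound holds for each one that satisfies Condition 1. *)

theory Defs
  imports "HOL-Analysis.Analysis" "HOL-Probability.Probability"
begin

text \<open>Messages are indexed by [n] = {1..n}. A message tuple is a function
  nat \<Rightarrow> bool list; coordinates outside [n] are the empty list.\<close>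

definition servers :: "nat \<Rightarrow> nat set set" where
  "servers n = {J. J \<subseteq> {1..n} \<and> J \<noteq> {}}"

definition cl :: "nat \<Rightarrow> (nat \<Rightarrow> nat set) \<Rightarrow> nat set \<Rightarrow> nat set" where
  "cl n A T = \<Inter>{S. T \<subseteq> S \<and> (\<forall>i\<in>{1..n}. A i \<subseteq> S \<longrightarrow> i \<in> S)}"

definition restr :: "(nat \<Rightarrow> bool list) \<Rightarrow> nat set \<Rightarrow> nat \<Rightarrow> bool list" where
  "restr x J = (\<lambda>j. if j \<in> J then x j else [])"

definition msg_space :: "nat \<Rightarrow> (nat \<Rightarrow> nat) \<Rightarrow> (nat \<Rightarrow> bool list) set" where
  "msg_space n t = {x. (\<forall>i\<in>{1..n}. length (x i) = t i) \<and> (\<forall>i. i \<notin> {1..n} \<longrightarrow> x i = [])}"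

definition server_out ::
  "nat \<Rightarrow> (nat set \<Rightarrow> (nat \<Rightarrow> bool list) \<Rightarrow> bool list) \<Rightarrow> (nat \<Rightarrow> bool list) \<Rightarrow> nat set \<Rightarrow> bool list" where
  "server_out n phi x = (\<lambda>J. if J \<in> servers n then phi J (restr x J) else [])"

definition decoded ::
  "nat \<Rightarrow> (nat \<Rightarrow> nat set) \<Rightarrow> (nat set \<Rightarrow> (nat \<Rightarrow> bool list) \<Rightarrow> bool list)
   \<Rightarrow> (nat \<Rightarrow> (nat set \<Rightarrow> bool list) \<Rightarrow> (nat \<Rightarrow> bool list) \<Rightarrow> bool list)
   \<Rightarrow> (nat \<Rightarrow> bool list) \<Rightarrow> nat \<Rightarrow> bool list" where
  "decoded n A phi psi x i = psi i (server_out n phi x) (restr x (A i))"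

definition is_code ::
  "nat \<Rightarrow> (nat \<Rightarrow> nat set) \<Rightarrow> (nat \<Rightarrow> nat) \<Rightarrow> (nat set \<Rightarrow> nat)
   \<Rightarrow> (nat set \<Rightarrow> (nat \<Rightarrow> bool list) \<Rightarrow> bool list)
   \<Rightarrow> (nat \<Rightarrow> (nat set \<Rightarrow> bool list) \<Rightarrow> (nat \<Rightarrow> bool list) \<Rightarrow> bool list) \<Rightarrow> bool" where
  "is_code n A t r phi psi \<longleftrightarrow>
     (\<forall>J\<in>servers n. \<forall>x\<in>msg_space n t. length (phi J (restr x J)) = r J) \<and>
     (\<forall>i\<in>{1..n}. \<forall>x\<in>msg_space n t. length (decoded n A phi psi x i) = t i)"

definition error_prob ::
  "nat \<Rightarrow> (nat \<Rightarrow> nat set) \<Rightarrow> (nat \<Rightarrow> nat)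
   \<Rightarrow> (nat set \<Rightarrow> (nat \<Rightarrow> bool list) \<Rightarrow> bool list)
   \<Rightarrow> (nat \<Rightarrow> (nat set \<Rightarrow> bool list) \<Rightarrow> (nat \<Rightarrow> bool list) \<Rightarrow> bool list) \<Rightarrow> real" where
  "error_prob n A t phi psi =
     measure_pmf.prob (pmf_of_set (msg_space n t))
       {x. \<exists>i\<in>{1..n}. decoded n A phi psi x i \<noteq> x i}"

definition achievable ::
  "nat \<Rightarrow> (nat \<Rightarrow> nat set) \<Rightarrow> (nat \<Rightarrow> real) \<Rightarrow> (nat set \<Rightarrow> real) \<Rightarrow> bool" where
  "achievable n A R C \<longleftrightarrow>
     (\<forall>\<epsilon>>0. \<exists>t r phi psi (rr::nat). rr > 0 \<and> is_code n A t r phi psi \<and>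
        (\<forall>i\<in>{1..n}. R i \<le> real (t i) / real rr) \<and>
        (\<forall>J\<in>servers n. C J \<ge> real (r J) / real rr) \<and>
        error_prob n A t phi psi \<le> \<epsilon>)"

definition capacity_region ::
  "nat \<Rightarrow> (nat \<Rightarrow> nat set) \<Rightarrow> (nat set \<Rightarrow> real) \<Rightarrow> (nat \<Rightarrow> real) set" where
  "capacity_region n A C = closure {R. achievable n A R C}"

end

theory Submission
  imports Defs
begin

lemma closed_sum_le: "closed {R::nat\<Rightarrow>real. (\<Sum>i\<in>I. R i) \<le> B}"
  by (intro closed_Collect_le continuous_intros) auto

lemma cl_least:
  assumes "T \<subseteq> S" "\<forall>i\<in>{1..n}. A i \<subseteq> S \<longrightarrow> i \<in> S"
  shows "cl n A T \<subseteq> S"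
  using assms unfolding cl_def by (intro Inter_lower) auto

lemma card_bool_lists: "card {xs::bool list. length xs = k} = 2^k"
  using card_lists_length_eq[of "UNIV :: bool set" k] by simp

lemma finite_bool_lists: "finite {xs::bool list. length xs = k}"
  using finite_lists_length_eq[of "UNIV :: bool set" k] by simp

lemma msg_space_bij:
  "bij_betw (\<lambda>x. restrict x {1..n}) (msg_space n t) (PiE {1..n} (\<lambda>i. {xs::bool list. length xs = t i}))"
proof (rule bij_betw_byWitness[where f'="\<lambda>f i. if i \<in> {1..n} then f i else []"])
  show "\<forall>a\<in>msg_space n t. (\<lambda>i. if i \<in> {1..n} then restrict a {1..n} i else []) = a"
    by (auto simp: msg_space_def fun_eq_iff)
  show "\<forall>a'\<in>PiE {1..n} (\<lambda>i. {xs::bool list. length xs = t i}). restrict (\<lambda>i. if i \<in> {1..n} then a' i else []) {1..n} = a'"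
    by (auto simp: fun_eq_iff PiE_def extensional_def)
  show "(\<lambda>x. restrict x {1..n}) ` msg_space n t \<subseteq> PiE {1..n} (\<lambda>i. {xs::bool list. length xs = t i})"
    by (auto simp: msg_space_def)
  show "(\<lambda>f i. if i \<in> {1..n} then f i else []) ` PiE {1..n} (\<lambda>i. {xs::bool list. length xs = t i}) \<subseteq> msg_space n t"
    by (auto simp: msg_space_def PiE_def Pi_def)
qed

lemma msg_space_finite: "finite (msg_space n t)"
  using bij_betw_finite[OF msg_space_bij[of n t]] by (simp add: finite_PiE finite_bool_lists)

lemma msg_space_card: "card (msg_space n t) = 2 ^ (\<Sum>i\<in>{1..n}. t i)"
  using bij_betw_same_card[OF msg_space_bij[of n t]]
  by (simp add: card_PiE card_bool_lists power_sum)

lemma msg_space_ne: "msg_space n t \<noteq> {}"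
proof -
  have "(\<lambda>i. if i \<in> {1..n} then replicate (t i) False else []) \<in> msg_space n t"
    by (auto simp: msg_space_def)
  thus ?thesis by blast
qed

lemma card_out_space: "finite S \<Longrightarrow> card (PiE S (\<lambda>J. {xs::bool list. length xs = r J})) = 2 ^ (\<Sum>J\<in>S. r J)"
  by (simp add: card_PiE card_bool_lists power_sum)

lemma finite_servers: "finite (servers n)"
  by (rule finite_subset[of _ "Pow {1..n}"]) (auto simp: servers_def)


lemma rect_lemma:
  fixes G :: "('p \<times> 'q) set"
  assumes fP: "finite P" and fQ: "finite Q" and ne: "Q \<noteq> {}" and sub: "G \<subseteq> P \<times> Q"
  shows "\<exists>q0\<in>Q. 2 * card G \<le> card {z\<in>G. (fst z, q0) \<in> G} + card P * card Q"
proof -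
  define s where "s q = card {p. (p,q) \<in> G}" for q
  obtain q0 where q0: "q0 \<in> Q" "\<forall>q\<in>Q. s q \<le> s q0"
  proof -
    have "s ` Q \<noteq> {}" "finite (s ` Q)" using ne fQ by auto
    then have "Max (s ` Q) \<in> s ` Q" by (intro Max_in) simp_all
    then obtain q0 where "q0 \<in> Q" "s q0 = Max (s ` Q)" by auto
    moreover have "\<forall>q\<in>Q. s q \<le> Max (s ` Q)" using fQ by auto
    ultimately show ?thesis using that by auto
  qed
  have fin: "finite G" using sub fP fQ by (meson finite_SigmaI finite_subset)
  have fibfin: "finite {p. (p,q) \<in> G}" for q
    using sub fP by (rule_tac finite_subset[OF _ fP]) auto
  have "card G = card (Sigma Q (\<lambda>q. {p. (p,q) \<in> G}))"
  proof -
    have e: "(\<lambda>(p,q). (q,p)) ` G = Sigma Q (\<lambda>q. {p. (p,q) \<in> G})"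
      using sub by (auto simp: image_def) (metis case_prod_conv)
    have "inj_on (\<lambda>(p,q). (q,p)) G" by (auto simp: inj_on_def)
    then show ?thesis using e by (metis card_image)
  qed
  also have "\<dots> = (\<Sum>q\<in>Q. s q)" using fQ fibfin by (simp add: card_SigmaI s_def)
  also have "\<dots> \<le> (\<Sum>q\<in>Q. s q0)" by (rule sum_mono) (use q0 in auto)
  finally have c1: "card G \<le> card Q * s q0" by simp
  define S where "S = {p. (p,q0) \<in> G}"
  have SP: "S \<subseteq> P" using sub by (auto simp: S_def)
  have sS: "s q0 = card S" by (simp add: s_def S_def)
  have d: "G - {z\<in>G. (fst z, q0) \<in> G} \<subseteq> (P - S) \<times> Q" using sub by (auto simp: S_def)
  have "card (G - {z\<in>G. (fst z, q0) \<in> G}) \<le> card ((P - S) \<times> Q)"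
    by (rule card_mono[OF _ d]) (use fP fQ in auto)
  also have "\<dots> = (card P - card S) * card Q" using fP SP by (simp add: card_cartesian_product card_Diff_subset finite_subset)
  finally have c2: "card (G - {z\<in>G. (fst z, q0) \<in> G}) \<le> (card P - card S) * card Q" .
  have c3: "card G = card {z\<in>G. (fst z, q0) \<in> G} + card (G - {z\<in>G. (fst z, q0) \<in> G})"
  proof -
    have "card (G - {z\<in>G. (fst z, q0) \<in> G}) = card G - card {z\<in>G. (fst z, q0) \<in> G}"
      using fin by (intro card_Diff_subset) auto
    moreover have "card {z\<in>G. (fst z, q0) \<in> G} \<le> card G" using fin by (intro card_mono) auto
    ultimately show ?thesis by simp
  qed
  have "card S \<le> card P" using SP fP by (simp add: card_mono)
  then have "(card P - card S) * card Q = card P * card Q - card S * card Q" by (simp add: diff_mult_distrib)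
  moreover have "card S * card Q \<le> card P * card Q" using \<open>card S \<le> card P\<close> by simp
  ultimately have c4: "card (G - {z\<in>G. (fst z, q0) \<in> G}) + card S * card Q \<le> card P * card Q"
    using c2 by linarith
  have c5: "card G \<le> card S * card Q" using c1 sS by (simp add: mult.commute)
  have "2 * card G \<le> card {z\<in>G. (fst z, q0) \<in> G} + card P * card Q"
    using c3 c4 c5 by linarith
  then show ?thesis using q0(1) by blast
qed


lemma agree:
  assumes gx: "\<forall>i\<in>{1..n}. decoded n A phi psi x i = x i"
    and gx': "\<forall>i\<in>{1..n}. decoded n A phi psi x' i = x' i"
    and Y: "server_out n phi x = server_out n phi x'"
    and T: "T \<subseteq> {i. x i = x' i}"
  shows "cl n A T \<subseteq> {i. x i = x' i}"
proof (rule cl_least[OF T], intro ballI impI)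
  fix i assume i: "i \<in> {1..n}" and Ai: "A i \<subseteq> {i. x i = x' i}"
  have "restr x (A i) = restr x' (A i)" using Ai by (auto simp: restr_def fun_eq_iff)
  then have "decoded n A phi psi x i = decoded n A phi psi x' i"
    by (simp add: decoded_def Y)
  then show "i \<in> {i. x i = x' i}" using gx gx' i by simp
qed

lemma outside: "x \<in> msg_space n t \<Longrightarrow> i \<notin> {1..n} \<Longrightarrow> x i = []"
  by (simp add: msg_space_def)

lemma inj_main:
  fixes U V W :: "nat set" and w0 :: "nat \<Rightarrow> bool list"
  assumes U_def: "U = cl n A {}"
    and V_sub: "V \<subseteq> {1..n} - U"
    and V_cl: "cl n A (U \<union> V) = {1..n}"
    and cond1: "V \<subseteq> cl n A ({1..n} - V)"
    and W_def: "W = {1..n} - (U \<union> V)"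
    and Sa_def: "Sa = {J\<in>servers n. J \<inter> V \<noteq> {} \<and> \<not> J \<subseteq> U \<union> V}"
    and mix_def: "mix = (\<lambda>x i. if i \<in> W then w0 i else x i)"
    and G_def: "G = {x\<in>msg_space n t. \<forall>i\<in>{1..n}. decoded n A phi psi x i = x i}"
  shows "inj_on (\<lambda>x. (restrict (server_out n phi x) (servers n), restrict (server_out n phi (mix x)) Sa))
           {x\<in>G. mix x \<in> G}"
proof (rule inj_onI)
  fix x x' assume x: "x \<in> {x\<in>G. mix x \<in> G}" and x': "x' \<in> {x\<in>G. mix x \<in> G}"
    and eq: "(restrict (server_out n phi x) (servers n), restrict (server_out n phi (mix x)) Sa) =
             (restrict (server_out n phi x') (servers n), restrict (server_out n phi (mix x')) Sa)"
  have xM: "x \<in> msg_space n t" and x'M: "x' \<in> msg_space n t"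
    and gx: "\<forall>i\<in>{1..n}. decoded n A phi psi x i = x i"
    and gx': "\<forall>i\<in>{1..n}. decoded n A phi psi x' i = x' i"
    and mM: "mix x \<in> msg_space n t" and m'M: "mix x' \<in> msg_space n t"
    and gm: "\<forall>i\<in>{1..n}. decoded n A phi psi (mix x) i = mix x i"
    and gm': "\<forall>i\<in>{1..n}. decoded n A phi psi (mix x') i = mix x' i"
    using x x' by (auto simp: G_def)
  have Y: "server_out n phi x = server_out n phi x'"
  proof
    fix J show "server_out n phi x J = server_out n phi x' J"
    proof (cases "J \<in> servers n")
      case True then show ?thesis using fun_cong[OF arg_cong[OF eq, of fst], of J] by simp
    next
      case False then show ?thesis by (simp add: server_out_def)
    qed
  qed
  have U_agree: "U \<subseteq> {i. x i = x' i}"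
    using agree[OF gx gx' Y, of "{}"] U_def by simp
  have Ymix: "server_out n phi (mix x) = server_out n phi (mix x')"
  proof
    fix J show "server_out n phi (mix x) J = server_out n phi (mix x') J"
    proof (cases "J \<in> servers n")
      case False then show ?thesis by (simp add: server_out_def)
    next
      case Js: True
      show ?thesis
      proof (cases "J \<in> Sa")
        case True then show ?thesis using fun_cong[OF arg_cong[OF eq, of snd], of J] by simp
      next
        case False
        then have "J \<inter> V = {} \<or> J \<subseteq> U \<union> V" using Js Sa_def by auto
        then show ?thesis
        proof
          assume JV: "J \<inter> V = {}"
          have Jn: "J \<subseteq> {1..n}" using Js by (simp add: servers_def)
          have "restr (mix x) J = restr (mix x') J"
            using JV Jn U_agree by (auto simp: restr_def mix_def W_def fun_eq_iff)
          then show ?thesis using Js by (simp add: server_out_def)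
        next
          assume JUV: "J \<subseteq> U \<union> V"
          have "restr (mix x) J = restr x J" "restr (mix x') J = restr x' J"
            using JUV by (auto simp: restr_def mix_def W_def fun_eq_iff)
          moreover have "server_out n phi x J = server_out n phi x' J" using Y by simp
          ultimately show ?thesis using Js by (simp add: server_out_def)
        qed
      qed
    qed
  qed
  have "{1..n} - V \<subseteq> {i. mix x i = mix x' i}"
    using U_agree by (auto simp: mix_def W_def)
  then have "cl n A ({1..n} - V) \<subseteq> {i. mix x i = mix x' i}"
    by (rule agree[OF gm gm' Ymix])
  then have "V \<subseteq> {i. mix x i = mix x' i}" using cond1 by blast
  then have V_agree: "V \<subseteq> {i. x i = x' i}" using V_sub by (auto simp: mix_def W_def)
  have "cl n A (U \<union> V) \<subseteq> {i. x i = x' i}"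
    by (rule agree[OF gx gx' Y]) (use U_agree V_agree in auto)
  then have "{1..n} \<subseteq> {i. x i = x' i}" using V_cl by simp
  show "x = x'"
  proof
    fix i show "x i = x' i"
    proof (cases "i \<in> {1..n}")
      case True then show ?thesis using \<open>{1..n} \<subseteq> {i. x i = x' i}\<close> by blast
    next
      case False then show ?thesis using outside[OF xM] outside[OF x'M] by simp
    qed
  qed
qed


lemma main_bound:
  fixes U V :: "nat set"
  assumes U_def: "U = cl n A {}"
    and V_sub: "V \<subseteq> {1..n} - U"
    and V_cl: "cl n A (U \<union> V) = {1..n}"
    and cond1: "V \<subseteq> cl n A ({1..n} - V)"
    and code: "is_code n A t r phi psi"
    and err: "error_prob n A t phi psi \<le> 1/8"
  shows "(\<Sum>i\<in>{1..n}. t i) \<le> (\<Sum>J\<in>servers n. r J)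
           + (\<Sum>J\<in>{J\<in>servers n. J \<inter> V \<noteq> {} \<and> \<not> J \<subseteq> U \<union> V}. r J)"
proof -
  define Sa where "Sa = {J\<in>servers n. J \<inter> V \<noteq> {} \<and> \<not> J \<subseteq> U \<union> V}"
  define M where "M = msg_space n t"
  define G where "G = {x\<in>msg_space n t. \<forall>i\<in>{1..n}. decoded n A phi psi x i = x i}"
  define E where "E = {x. \<exists>i\<in>{1..n}. decoded n A phi psi x i \<noteq> x i}"
  define W where "W = {1..n} - (U \<union> V)"
  define T where "T = (\<Sum>i\<in>{1..n}. t i)"
  define K where "K = (\<Sum>J\<in>servers n. r J) + (\<Sum>J\<in>Sa. r J)"
  have fM: "finite M" and neM: "M \<noteq> {}" and cM: "card M = 2^T"
    using msg_space_finite msg_space_ne msg_space_card by (auto simp: M_def T_def)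
  have GME: "G = M - (M \<inter> E)" by (auto simp: G_def M_def E_def)
  have "error_prob n A t phi psi = card (M \<inter> E) / card M"
    unfolding error_prob_def M_def E_def using msg_space_finite msg_space_ne
    by (simp add: measure_pmf_of_set)
  then have eb: "real (card (M \<inter> E)) \<le> card M / 8"
  proof -
    assume h: "error_prob n A t phi psi = card (M \<inter> E) / card M"
    have "card M > 0" using fM neM by (simp add: card_gt_0_iff)
    then have "real (card (M \<inter> E)) = real (card M) * error_prob n A t phi psi" using h by simp
    also have "\<dots> \<le> real (card M) * (1/8)" by (rule mult_left_mono[OF err]) simp
    finally show ?thesis by simp
  qed
  have cG: "real (card G) = card M - card (M \<inter> E)"
    using fM by (simp add: GME card_Diff_subset of_nat_diff card_mono)
  define e where "e x = (restr x (- W), restr x W)" for x :: "nat \<Rightarrow> bool list"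
  define P where "P = fst ` e ` M"
  define Q where "Q = snd ` e ` M"
  define comb where "comb p q = (\<lambda>i. if i \<in> W then q i else p i)" for p q :: "nat \<Rightarrow> bool list"
  have comb_e: "comb (fst (e x)) (snd (e x)) = x" for x
    by (auto simp: comb_def e_def restr_def fun_eq_iff)
  have inj_e: "inj_on e M" by (rule inj_on_inverseI[where g="\<lambda>z. comb (fst z) (snd z)"]) (rule comb_e)
  have comb_M: "comb p q \<in> M" if pq: "p \<in> P" "q \<in> Q" for p q
  proof -
    obtain x1 x2 where "x1 \<in> M" "x2 \<in> M" "p = restr x1 (-W)" "q = restr x2 W"
      using pq by (auto simp: P_def Q_def e_def)
    then show ?thesis by (auto simp: M_def msg_space_def comb_def restr_def W_def)
  qed
  have e_comb: "e (comb p q) = (p, q)" if pq: "p \<in> P" "q \<in> Q" for p q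
  proof -
    obtain x1 x2 where "x1 \<in> M" "x2 \<in> M" "p = restr x1 (-W)" "q = restr x2 W"
      using pq by (auto simp: P_def Q_def e_def)
    then show ?thesis by (auto simp: comb_def restr_def e_def fun_eq_iff)
  qed
  have eM: "e ` M = P \<times> Q"
  proof
    show "e ` M \<subseteq> P \<times> Q" unfolding P_def Q_def by (auto intro!: image_eqI simp del: e_def) (metis fst_conv, metis snd_conv)
    show "P \<times> Q \<subseteq> e ` M"
    proof
      fix z assume "z \<in> P \<times> Q"
      then show "z \<in> e ` M" using comb_M e_comb by (metis SigmaE imageI)
    qed
  qed
  have fP: "finite P" "finite Q" using fM by (auto simp: P_def Q_def)
  have neQ: "Q \<noteq> {}" using neM by (auto simp: Q_def)
  have cMPQ: "card M = card P * card Q"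
    using card_image[OF inj_e] eM by (simp add: card_cartesian_product)
  have GM: "G \<subseteq> M" by (auto simp: G_def M_def)
  have eG: "e ` G \<subseteq> P \<times> Q" using GM eM by auto
  obtain q0 where q0: "q0 \<in> Q" "2 * card (e ` G) \<le> card {z\<in>e ` G. (fst z, q0) \<in> e ` G} + card P * card Q"
    using rect_lemma[OF fP neQ eG] by blast
  obtain w0 where w0: "w0 \<in> M" "snd (e w0) = q0" using q0(1) by (auto simp: Q_def)
  define mix where "mix = (\<lambda>x i. if i \<in> W then w0 i else x i)"
  define G' where "G' = {x\<in>G. mix x \<in> G}"
  have e_mix: "e (mix x) = (fst (e x), q0)" for x
    using w0(2) by (auto simp: e_def mix_def restr_def fun_eq_iff) (metis)+
  have mixM: "mix x \<in> M" if "x \<in> M" for x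
  proof -
    have "fst (e x) \<in> P" using that by (auto simp: P_def)
    moreover have "mix x = comb (fst (e x)) q0" using w0(2)
      by (auto simp: comb_def mix_def e_def restr_def fun_eq_iff) metis
    ultimately show ?thesis using comb_M q0(1) by simp
  qed
  have "e ` G' = {z\<in>e ` G. (fst z, q0) \<in> e ` G}"
  proof
    show "e ` G' \<subseteq> {z\<in>e ` G. (fst z, q0) \<in> e ` G}"
      by (auto simp: G'_def) (metis e_mix imageI)
    show "{z\<in>e ` G. (fst z, q0) \<in> e ` G} \<subseteq> e ` G'"
    proof
      fix z assume z: "z \<in> {z\<in>e ` G. (fst z, q0) \<in> e ` G}"
      then obtain x y where x: "x \<in> G" "z = e x" and y: "y \<in> G" "e y = (fst (e x), q0)" by auto
      have "e y = e (mix x)" using y e_mix by simp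
      then have "y = mix x" using inj_e GM x y mixM by (meson inj_onD subsetD)
      then show "z \<in> e ` G'" using x y by (auto simp: G'_def)
    qed
  qed
  moreover have "card (e ` G) = card G" "card (e ` G') = card G'"
    using inj_e GM by (auto simp: G'_def intro!: card_image inj_on_subset[OF inj_e])
  ultimately have c1: "2 * card G \<le> card G' + card M" using q0(2) cMPQ by simp
  define F where "F x = (restrict (server_out n phi x) (servers n), restrict (server_out n phi (mix x)) Sa)" for x
  have injF: "inj_on F G'"
    unfolding F_def G'_def
    by (rule inj_main[OF U_def V_sub V_cl cond1 W_def Sa_def mix_def G_def])
  have Sa_sub: "Sa \<subseteq> servers n" by (auto simp: Sa_def)
  have fSa: "finite Sa" using finite_servers Sa_sub by (rule finite_subset[rotated])
  have lenY: "length (server_out n phi x J) = r J" if "x \<in> M" "J \<in> servers n" for x J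
    using code that by (simp add: is_code_def server_out_def M_def)
  have FG: "F ` G' \<subseteq> PiE (servers n) (\<lambda>J. {xs::bool list. length xs = r J}) \<times> PiE Sa (\<lambda>J. {xs::bool list. length xs = r J})"
  proof
    fix z assume "z \<in> F ` G'"
    then obtain x where x: "x \<in> G'" "z = F x" by auto
    then have "x \<in> M" "mix x \<in> M" using GM by (auto simp: G'_def)
    then show "z \<in> PiE (servers n) (\<lambda>J. {xs::bool list. length xs = r J}) \<times> PiE Sa (\<lambda>J. {xs::bool list. length xs = r J})"
      using x lenY Sa_sub by (auto simp: F_def)
  qed
  have "card G' = card (F ` G')" using injF by (simp add: card_image)
  also have "\<dots> \<le> card (PiE (servers n) (\<lambda>J. {xs::bool list. length xs = r J}) \<times> PiE Sa (\<lambda>J. {xs::bool list. length xs = r J}))"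
    by (rule card_mono[OF _ FG]) (simp add: finite_PiE finite_bool_lists finite_servers fSa)
  also have "\<dots> = 2^K"
    by (simp add: card_cartesian_product card_out_space finite_servers fSa K_def power_add)
  finally have c2: "card G' \<le> 2^K" .
  have "2 * card G \<le> 2^K + 2^T" using c1 c2 cM by linarith
  then have "real (2 * card G) \<le> real (2^K + 2^T)" by (simp only: of_nat_le_iff)
  then have "real (2 * card G) \<le> 2^K + 2^T" by simp
  moreover have "real (card G) \<ge> 7/8 * 2^T" using cG eb cM by simp
  ultimately have "3/4 * (2::real)^T \<le> 2^K" by simp
  show ?thesis
  proof (rule ccontr)
    assume "\<not> ?thesis"
    then have "K + 1 \<le> T" by (simp add: K_def T_def Sa_def)
    then have "(2::real)^(K+1) \<le> 2^T" by (rule power_increasing) simp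
    moreover have "(0::real) < 2^K" by simp
    ultimately show False using \<open>3/4 * (2::real)^T \<le> 2^K\<close> by simp
  qed
qed


theorem theorem2:
  fixes n :: nat and A :: "nat \<Rightarrow> nat set" and C :: "nat set \<Rightarrow> real"
    and U V :: "nat set" and R :: "nat \<Rightarrow> real"
  assumes side_info: "\<forall>i\<in>{1..n}. A i \<subseteq> {1..n} - {i}"
    and cap_nonneg: "\<forall>J\<in>servers n. C J \<ge> 0"
    and U_def: "U = cl n A {}"
    and V_sub: "V \<subseteq> {1..n} - U"
    and V_cl: "cl n A (U \<union> V) = {1..n}"
    and V_min: "\<forall>W. W \<subseteq> {1..n} - U \<and> cl n A (U \<union> W) = {1..n} \<longrightarrow> card V \<le> card W"
    and cond1: "V \<subseteq> cl n A ({1..n} - V)"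
    and R_in: "R \<in> capacity_region n A C"
  shows "(\<Sum>i\<in>{1..n}. R i) \<le> (\<Sum>J\<in>servers n. C J)
           + (\<Sum>J\<in>{J\<in>servers n. J \<inter> V \<noteq> {} \<and> \<not> J \<subseteq> U \<union> V}. C J)"
proof -
  define Sa where "Sa = {J\<in>servers n. J \<inter> V \<noteq> {} \<and> \<not> J \<subseteq> U \<union> V}"
  define B where "B = (\<Sum>J\<in>servers n. C J) + (\<Sum>J\<in>Sa. C J)"
  have Sa_sub: "Sa \<subseteq> servers n" by (auto simp: Sa_def)
  have "{R. achievable n A R C} \<subseteq> {R::nat\<Rightarrow>real. (\<Sum>i\<in>{1..n}. R i) \<le> B}"
  proof
    fix R' assume "R' \<in> {R. achievable n A R C}"
    then obtain t r phi psi rr where rr: "(rr::nat) > 0" and code: "is_code n A t r phi psi"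
      and Rt: "\<forall>i\<in>{1..n}. R' i \<le> real (t i) / real rr"
      and Cr: "\<forall>J\<in>servers n. C J \<ge> real (r J) / real rr"
      and err: "error_prob n A t phi psi \<le> 1/8"
    proof -
      have "achievable n A R' C" using \<open>R' \<in> {R. achievable n A R C}\<close> by simp
      then have "\<forall>\<epsilon>>0. \<exists>t r phi psi (rr::nat). rr > 0 \<and> is_code n A t r phi psi \<and>
        (\<forall>i\<in>{1..n}. R' i \<le> real (t i) / real rr) \<and>
        (\<forall>J\<in>servers n. C J \<ge> real (r J) / real rr) \<and>
        error_prob n A t phi psi \<le> \<epsilon>" by (simp add: achievable_def)
      then have "\<exists>t r phi psi (rr::nat). rr > 0 \<and> is_code n A t r phi psi \<and>
        (\<forall>i\<in>{1..n}. R' i \<le> real (t i) / real rr) \<and>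
        (\<forall>J\<in>servers n. C J \<ge> real (r J) / real rr) \<and>
        error_prob n A t phi psi \<le> 1/8" by (rule allE[where x="1/8"]) simp
      then show ?thesis using that by blast
    qed
    have nb: "(\<Sum>i\<in>{1..n}. t i) \<le> (\<Sum>J\<in>servers n. r J) + (\<Sum>J\<in>Sa. r J)"
      using main_bound[OF U_def V_sub V_cl cond1 code err] by (simp add: Sa_def)
    have "(\<Sum>i\<in>{1..n}. R' i) \<le> (\<Sum>i\<in>{1..n}. real (t i) / real rr)"
      using Rt by (intro sum_mono) auto
    also have "\<dots> = real (\<Sum>i\<in>{1..n}. t i) / real rr" by (simp add: sum_divide_distrib)
    also have "\<dots> \<le> real ((\<Sum>J\<in>servers n. r J) + (\<Sum>J\<in>Sa. r J)) / real rr"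
      using rr by (intro divide_right_mono) (simp_all only: of_nat_le_iff nb of_nat_0_le_iff)
    also have "\<dots> = (\<Sum>J\<in>servers n. real (r J) / real rr) + (\<Sum>J\<in>Sa. real (r J) / real rr)"
      by (simp add: sum_divide_distrib add_divide_distrib)
    also have "\<dots> \<le> B" unfolding B_def
      using Cr Sa_sub by (intro add_mono sum_mono) auto
    finally show "R' \<in> {R::nat\<Rightarrow>real. (\<Sum>i\<in>{1..n}. R i) \<le> B}" by simp
  qed
  then have "capacity_region n A C \<subseteq> {R::nat\<Rightarrow>real. (\<Sum>i\<in>{1..n}. R i) \<le> B}"
    unfolding capacity_region_def
    by (rule closure_minimal) (intro closed_Collect_le continuous_intros, auto)
  then show ?thesis using R_in by (auto simp: B_def Sa_def)
qed

end
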